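(* Let $k\le n$ and $\phi(k)<m<2n$. Then the value in $U_q^+(\mathfrak{sp}_{2n})$ of the bracketed word $[x_k\,x_{k+1}\cdots x_n\,y_m]$, where $y_m=v[n+1,m]=[x_{n+1},[x_{n+2},[\dots,[x_{m-1},x_m]\dots]]]$, does not depend on the arrangement of the (skew) brackets on the sequence $x_k,x_{k+1},\dots,x_n,y_m$.
   Context: Let $\mathbf{k}$ be a field, $G$ an abelian group, $n\ge2$, $X=\{x_1,\dots,x_n\}$, $g_i\in G$, characters $\chi^i:G\to\mathbf{k}^*$, $p_{ij}=\chi^i(g_j)$; for homogeneous $u,v$, $p(u,v)=\chi^u(g_v)$ (obtained by replacing $x_i$ by $g_i$, resp. $\chi^i$). $G\langle X\rangle$: skew group algebra with $x_ig=\chi^i(g)gx_i$; skew bracket $[u,v]=uv-p(u,v)vu$. Fix $q\in\mathbf{k}^*$, $q^3\ne1$, $q\ne-1$; assume $p_{ii}=q$ ($i<n$), $p_{nn}=q^2$, $p_{i,i-1}p_{i-1,i}=q^{-1}$ ($1<i<n$), $p_{n-1,n}p_{n,n-1}=q^{-2}$, $p_{ij}p_{ji}=1$ ($j>i+1$). $U_q^+(\mathfrak{sp}_{2n})$ is the quotient of $G\langle X\rangle$ by the ideal generated by $[x_i,[x_i,x_{i+1}]]$, $[[x_i,x_{i+1}],x_{i+1}]$ ($1\le i<n-1$), $[x_i,x_j]$ ($j>i+1$), $[[x_{n-1},x_n],x_n]$, $[x_{n-1},[x_{n-1},[x_{n-1},x_n]]]$. For $n<i<2n$, $x_i:=x_{2n-i}$;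 $\phi(i)=2n-i$. *)

theory Defs
  imports "HOL-Library.Poly_Mapping"
begin

text \<open>The skew group algebra G<X>: k-linear combinations of g*w, with g in G (written
additively, type 'g) and w a word in the letters x_i (list of indices). Relation
x_i g = chi_i(g) g x_i gives (g w)(h v) = chi^w(h) (g+h) (w v).\<close>

type_synonym ('g,'k) galg = "('g \<times> nat list) \<Rightarrow>\<^sub>0 'k"

definition chiw :: "(nat \<Rightarrow> 'g \<Rightarrow> 'k::comm_monoid_mult) \<Rightarrow> nat list \<Rightarrow> 'g \<Rightarrow> 'k" where
  "chiw \<chi> w h = (\<Prod>i\<leftarrow>w. \<chi> i h)"

definition gmult :: "(nat \<Rightarrow> 'g::ab_group_add \<Rightarrow> 'k::field) \<Rightarrow> ('g,'k) galg \<Rightarrow> ('g,'k) galg \<Rightarrow> ('g,'k) galg" where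
  "gmult \<chi> a b = (\<Sum>(g,w)\<in>Poly_Mapping.keys a. \<Sum>(h,v)\<in>Poly_Mapping.keys b.
      Poly_Mapping.single (g + h, w @ v) (Poly_Mapping.lookup a (g,w) * Poly_Mapping.lookup b (h,v) * chiw \<chi> w h))"

definition gscal :: "(nat \<Rightarrow> 'g::ab_group_add \<Rightarrow> 'k::field) \<Rightarrow> 'k \<Rightarrow> ('g,'k) galg \<Rightarrow> ('g,'k) galg" where
  "gscal \<chi> c a = gmult \<chi> (Poly_Mapping.single (0, []) c) a"

definition pdeg :: "(nat \<Rightarrow> 'g) \<Rightarrow> (nat \<Rightarrow> 'g \<Rightarrow> 'k::comm_monoid_mult) \<Rightarrow> nat list \<Rightarrow> nat list \<Rightarrow> 'k" where
  "pdeg g \<chi> u v = (\<Prod>i\<leftarrow>u. \<Prod>j\<leftarrow>v. \<chi> i (g j))"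

text \<open>Homogeneous elements are carried together with their degree (list of letters).
Skew bracket [u,v] = uv - p(u,v) vu.\<close>
definition sbr :: "(nat \<Rightarrow> 'g::ab_group_add) \<Rightarrow> (nat \<Rightarrow> 'g \<Rightarrow> 'k::field)
    \<Rightarrow> ('g,'k) galg \<times> nat list \<Rightarrow> ('g,'k) galg \<times> nat list \<Rightarrow> ('g,'k) galg \<times> nat list" where
  "sbr g \<chi> a b = (gmult \<chi> (fst a) (fst b) - gscal \<chi> (pdeg g \<chi> (snd a) (snd b)) (gmult \<chi> (fst b) (fst a)),
                   snd a @ snd b)"

definition xg :: "nat \<Rightarrow> ('g::ab_group_add,'k::field) galg \<times> nat list" where
  "xg i = (Poly_Mapping.single (0, [i]) 1, [i])"

inductive_set gideal :: "(nat \<Rightarrow> 'g::ab_group_add \<Rightarrow> 'k::field) \<Rightarrow> ('g,'k) galg set \<Rightarrow> ('g,'k) galg set"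
  for \<chi> R where
  gi_zero: "0 \<in> gideal \<chi> R"
| gi_gen: "r \<in> R \<Longrightarrow> r \<in> gideal \<chi> R"
| gi_add: "a \<in> gideal \<chi> R \<Longrightarrow> b \<in> gideal \<chi> R \<Longrightarrow> a + b \<in> gideal \<chi> R"
| gi_mult: "a \<in> gideal \<chi> R \<Longrightarrow> gmult \<chi> (gmult \<chi> u a) v \<in> gideal \<chi> R"

definition sp_rels :: "nat \<Rightarrow> (nat \<Rightarrow> 'g::ab_group_add) \<Rightarrow> (nat \<Rightarrow> 'g \<Rightarrow> 'k::field) \<Rightarrow> ('g,'k) galg set" where
  "sp_rels n g \<chi> =
     {fst (sbr g \<chi> (xg i) (sbr g \<chi> (xg i) (xg (i+1)))) | i. 1 \<le> i \<and> i < n - 1}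
   \<union> {fst (sbr g \<chi> (sbr g \<chi> (xg i) (xg (i+1))) (xg (i+1))) | i. 1 \<le> i \<and> i < n - 1}
   \<union> {fst (sbr g \<chi> (xg i) (xg j)) | i j. 1 \<le> i \<and> i + 1 < j \<and> j \<le> n}
   \<union> {fst (sbr g \<chi> (sbr g \<chi> (xg (n-1)) (xg n)) (xg n))}
   \<union> {fst (sbr g \<chi> (xg (n-1)) (sbr g \<chi> (xg (n-1)) (sbr g \<chi> (xg (n-1)) (xg n))))}"

definition Ueq :: "nat \<Rightarrow> (nat \<Rightarrow> 'g::ab_group_add) \<Rightarrow> (nat \<Rightarrow> 'g \<Rightarrow> 'k::field) \<Rightarrow> ('g,'k) galg \<Rightarrow> ('g,'k) galg \<Rightarrow> bool" where
  "Ueq n g \<chi> a b \<longleftrightarrow> a - b \<in> gideal \<chi> (sp_rels n g \<chi>)"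

definition xe :: "nat \<Rightarrow> nat \<Rightarrow> ('g::ab_group_add,'k::field) galg \<times> nat list" where
  "xe n i = xg (if i \<le> n then i else 2*n - i)"

fun rnest :: "(nat \<Rightarrow> 'g::ab_group_add) \<Rightarrow> (nat \<Rightarrow> 'g \<Rightarrow> 'k::field)
    \<Rightarrow> (('g,'k) galg \<times> nat list) list \<Rightarrow> ('g,'k) galg \<times> nat list" where
  "rnest g \<chi> [] = (0, [])"
| "rnest g \<chi> [a] = a"
| "rnest g \<chi> (a # b # zs) = sbr g \<chi> a (rnest g \<chi> (b # zs))"

definition vw :: "nat \<Rightarrow> (nat \<Rightarrow> 'g::ab_group_add) \<Rightarrow> (nat \<Rightarrow> 'g \<Rightarrow> 'k::field) \<Rightarrow> nat \<Rightarrow> nat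
    \<Rightarrow> ('g,'k) galg \<times> nat list" where
  "vw n g \<chi> a b = rnest g \<chi> (map (xe n) [a..<b+1])"

text \<open>Arrangements of brackets: full binary trees; the leaves (left to right) are the sequence.\<close>
datatype 'a btree = Lf 'a | Nd "'a btree" "'a btree"

fun leaves :: "'a btree \<Rightarrow> 'a list" where
  "leaves (Lf a) = [a]"
| "leaves (Nd l r) = leaves l @ leaves r"

fun bval :: "('a \<Rightarrow> 'a \<Rightarrow> 'a) \<Rightarrow> 'a btree \<Rightarrow> 'a" where
  "bval f (Lf a) = a"
| "bval f (Nd l r) = f (bval f l) (bval f r)"

end

theory Submission
  imports Defs "HOL-Library.Product_Plus"
begin

instantiation list :: (type) monoid_add
begin
definition zero_list_def: "0 = []"
definition plus_list_def: "(+) = (@)"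
instance by standard (auto simp: zero_list_def plus_list_def)
end

lemma pm_expand: "(a::'a \<Rightarrow>\<^sub>0 'b::comm_monoid_add) = (\<Sum>k\<in>Poly_Mapping.keys a. Poly_Mapping.single k (Poly_Mapping.lookup a k))"
  by (rule poly_mapping_eqI) (auto simp: lookup_sum lookup_single when_def in_keys_iff
      intro: sum.neutral cong: if_cong split: if_splits)

definition inS :: "(nat \<Rightarrow> 'g::ab_group_add \<Rightarrow> 'k::field) \<Rightarrow> ('g,'k) galg \<Rightarrow> bool" where
  "inS \<chi> a \<longleftrightarrow> (\<forall>k\<in>Poly_Mapping.keys a. fst k = 0 \<and> chiw \<chi> (snd k) 0 = 1)"

lemma gmult_eq:
  assumes "inS \<chi> a" "inS \<chi> b"
  shows "gmult \<chi> a b = a * b"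
proof -
  have "a * b = (\<Sum>k\<in>Poly_Mapping.keys a. Poly_Mapping.single k (Poly_Mapping.lookup a k)) * (\<Sum>l\<in>Poly_Mapping.keys b. Poly_Mapping.single l (Poly_Mapping.lookup b l))"
    by (subst pm_expand[of a], subst pm_expand[of b]) simp
  also have "\<dots> = (\<Sum>k\<in>Poly_Mapping.keys a. \<Sum>l\<in>Poly_Mapping.keys b. Poly_Mapping.single (k+l) (Poly_Mapping.lookup a k * Poly_Mapping.lookup b l))"
    by (simp add: sum_distrib_left sum_distrib_right mult_single sum.swap[of _ "Poly_Mapping.keys b"])
  also have "\<dots> = gmult \<chi> a b"
    unfolding gmult_def
    apply (rule sum.cong[OF refl])
    apply (clarsimp)
    apply (rule sum.cong[OF refl])
    using assms unfolding inS_def by (force simp: plus_list_def)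
  finally show ?thesis by simp
qed



definition sc :: "'k::field \<Rightarrow> ('g::ab_group_add,'k) galg" where
  "sc c = Poly_Mapping.single 0 c"

lemma sc_comm: "x * sc c = sc c * x"
proof -
  have "x * sc c = (\<Sum>k\<in>Poly_Mapping.keys x. Poly_Mapping.single k (Poly_Mapping.lookup x k)) * sc c"
    by (subst pm_expand[of x]) simp
  also have "\<dots> = sc c * (\<Sum>k\<in>Poly_Mapping.keys x. Poly_Mapping.single k (Poly_Mapping.lookup x k))"
    by (simp add: sum_distrib_left sum_distrib_right sc_def mult_single mult.commute)
  finally show ?thesis by (subst (asm) pm_expand[of x, symmetric])
qed

definition smul :: "'k::field \<Rightarrow> ('g::ab_group_add,'k) galg \<Rightarrow> ('g,'k) galg" where
  "smul c x = sc c * x"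

lemma smul_right: "x * smul c y = smul c (x * y)"
  unfolding smul_def by (metis mult.assoc sc_comm)
lemma smul_leftm: "smul c x * y = smul c (x * y)"
  unfolding smul_def by (simp add: mult.assoc)
lemma smul_smul: "smul c (smul d y) = smul (c*d) y"
  by (simp add: smul_def sc_def mult.assoc[symmetric] mult_single)
lemma smul_add: "smul c (x + y) = smul c x + smul c y"
  by (simp add: smul_def distrib_left)
lemma smul_diff: "smul c (x - y) = smul c x - smul c y"
  by (simp add: smul_def right_diff_distrib)
lemma smul_minus: "smul c (- y) = - smul c y"
  by (simp add: smul_def)
lemma smul_1[simp]: "smul 1 x = x" by (simp add: smul_def sc_def)
lemma smul_0[simp]: "smul 0 x = 0" by (simp add: smul_def sc_def)

lemmas scs = smul_right smul_leftm smul_smul smul_add smul_diff smul_minus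

lemma idA: fixes u v w :: "('g::ab_group_add,'k::field) galg"
  shows "(u*v - smul puv (v*u))*w - smul (puw*pvw) (w*(u*v - smul puv (v*u)))
   - (u*(v*w - smul pvw (w*v)) - smul (puv*puw) ((v*w - smul pvw (w*v))*u))
   = - smul puv (v * (u*w - smul puw (w*u))) + smul pvw ((u*w - smul puw (w*u)) * v)"
  by (simp add: algebra_simps scs)

lemma idL1: fixes u v w :: "('g::ab_group_add,'k::field) galg"
  shows "u*(v*w - smul pvw (w*v)) - smul (puv*puw) ((v*w - smul pvw (w*v))*u)
   = (u*v - smul puv (v*u))*w + smul puv (v*(u*w - smul puw (w*u)))
     - smul pvw ((u*w - smul puw (w*u))*v + smul puw (w*(u*v - smul puv (v*u))))"
  by (simp add: algebra_simps scs)

lemma idL2: fixes u v w :: "('g::ab_group_add,'k::field) galg"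
  shows "(v*w - smul pvw (w*v))*u - smul (pvu*pwu) (u*(v*w - smul pvw (w*v)))
   = v*(w*u - smul pwu (u*w)) + smul pwu ((v*u - smul pvu (u*v))*w)
     - smul pvw (w*(v*u - smul pvu (u*v)) + smul pvu ((w*u - smul pwu (u*w))*v))"
  by (simp add: algebra_simps scs)



definition brk :: "('g::ab_group_add,'k::field) galg \<Rightarrow> ('g,'k) galg \<Rightarrow> 'k \<Rightarrow> ('g,'k) galg" where
  "brk x y p = x*y - smul p (y*x)"

lemma smul_single: "smul c (Poly_Mapping.single k e) = Poly_Mapping.single k (c*e)"
  by (simp add: smul_def sc_def mult_single)

lemma ms: "Poly_Mapping.single (0::'g::ab_group_add, u) (c::'k::field) * Poly_Mapping.single (0, v) e = Poly_Mapping.single (0, u@v) (c*e)"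
  by (simp add: mult_single plus_list_def)

lemma msm: "Poly_Mapping.single (0::'g::ab_group_add, u) (c::'k::field) * (Poly_Mapping.single (0, v) e * z) = Poly_Mapping.single (0, u@v) (c*e) * z"
  by (simp add: ms mult.assoc[symmetric])

lemmas expand = brk_def smul_single ms msm distrib_left distrib_right left_diff_distrib right_diff_distrib
   smul_add smul_diff smul_minus mult_minus_left mult_minus_right append.simps

lemma core1:
  fixes \<alpha> \<beta> \<delta> :: nat and q r1 r2 r3 t :: "'k::field"
  assumes dist: "\<alpha> \<noteq> \<beta>" "\<beta> \<noteq> \<delta>" "\<alpha> \<noteq> \<delta>"
    and nz: "q \<noteq> 0" "r1 \<noteq> 0" "r2 \<noteq> 0" "r3 \<noteq> 0" and ht: "t * (q + 1) = 1"
  defines "a \<equiv> Poly_Mapping.single (0::'g::ab_group_add, [\<alpha>]) (1::'k)"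
    and "b \<equiv> Poly_Mapping.single (0::'g, [\<beta>]) (1::'k)"
    and "d \<equiv> Poly_Mapping.single (0::'g, [\<delta>]) (1::'k)"
  shows "brk b (brk d (brk b a (inverse q * inverse r1)) (inverse q * inverse r2 * inverse r3)) (r2*q*(inverse q * inverse r1))
    = smul (- (t * inverse r2)) (brk b (brk b d r2) (q*r2) * a)
    + smul (inverse q * inverse q * t * inverse r1 * inverse r1 * inverse r2 * inverse r3) (a * brk b (brk b d r2) (q*r2))
    + smul (- (inverse q * inverse q * t * inverse r1 * inverse r1 * inverse r2 * inverse r3)) (brk (brk a b r1) b (r1*q) * d)
    + smul (r2 * t * inverse r1 * inverse r1) (d * brk (brk a b r1) b (r1*q))
    + smul (- (r2 * inverse q * t * inverse r1 * inverse r1 * inverse r3)) (brk a d r3 * (b*b))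
    + smul (inverse q * inverse r1 * inverse r3) (b * (brk a d r3 * b))
    + smul (- (t * inverse r2 * inverse r3)) (b * (b * brk a d r3))"
  unfolding a_def b_def d_def
  apply (simp only: expand)
  apply (rule poly_mapping_eqI)
  apply (simp only: lookup_add lookup_minus lookup_uminus lookup_single when_def)
  subgoal for k
  proof -
    have ht2: "r * t + q * (r * t) = r" for r
    proof -
      have "r * t + q * (r * t) = r * (t * (q + 1))" by (simp add: algebra_simps)
      then show ?thesis using ht by simp
    qed
    have ds: "\<alpha> \<noteq> \<beta>" "\<beta> \<noteq> \<delta>" "\<alpha> \<noteq> \<delta>" "\<beta> \<noteq> \<alpha>" "\<delta> \<noteq> \<beta>" "\<delta> \<noteq> \<alpha>" using dist by auto
    show ?thesis
    proof (cases "k \<in> Pair 0 ` set [[\<alpha>,\<beta>,\<beta>,\<delta>],[\<alpha>,\<beta>,\<delta>,\<beta>],[\<alpha>,\<delta>,\<beta>,\<beta>],[\<beta>,\<alpha>,\<beta>,\<delta>],[\<beta>,\<alpha>,\<delta>,\<beta>],[\<beta>,\<beta>,\<alpha>,\<delta>],[\<beta>,\<beta>,\<delta>,\<alpha>],[\<beta>,\<delta>,\<alpha>,\<beta>],[\<beta>,\<delta>,\<beta>,\<alpha>],[\<delta>,\<alpha>,\<beta>,\<beta>],[\<delta>,\<beta>,\<alpha>,\<beta>],[\<delta>,\<beta>,\<beta>,\<alpha>]]")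
      case True
      then show ?thesis
        apply (simp only: set_simps image_insert image_empty insert_iff empty_iff)
        apply (elim disjE)
        apply (simp_all add: ds)
        using nz ht apply (simp_all add: field_simps)
        apply (simp_all add: ht2)
        done
    next
      case False
      then have "\<forall>w\<in>set [[\<alpha>,\<beta>,\<beta>,\<delta>],[\<alpha>,\<beta>,\<delta>,\<beta>],[\<alpha>,\<delta>,\<beta>,\<beta>],[\<beta>,\<alpha>,\<beta>,\<delta>],[\<beta>,\<alpha>,\<delta>,\<beta>],[\<beta>,\<beta>,\<alpha>,\<delta>],[\<beta>,\<beta>,\<delta>,\<alpha>],[\<beta>,\<delta>,\<alpha>,\<beta>],[\<beta>,\<delta>,\<beta>,\<alpha>],[\<delta>,\<alpha>,\<beta>,\<beta>],[\<delta>,\<beta>,\<alpha>,\<beta>],[\<delta>,\<beta>,\<beta>,\<alpha>]]. (0,w) \<noteq> k" by auto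
      then show ?thesis by simp
    qed
  qed
  done



lemma chiw_append: "chiw \<chi> (w @ v) h = chiw \<chi> w h * chiw \<chi> v h"
  by (simp add: chiw_def)

lemma pdeg_append1: "pdeg g \<chi> (u @ v) w = pdeg g \<chi> u w * pdeg g \<chi> v w"
  by (simp add: pdeg_def)
lemma pdeg_append2: "pdeg g \<chi> u (v @ w) = pdeg g \<chi> u v * pdeg g \<chi> u w"
  unfolding pdeg_def by (induction u) (simp_all add: algebra_simps)

lemma inS_0[simp]: "inS \<chi> 0" by (simp add: inS_def)
lemma inS_add: "inS \<chi> a \<Longrightarrow> inS \<chi> b \<Longrightarrow> inS \<chi> (a + b)"
  unfolding inS_def by (meson Un_iff keys_add subsetD)
lemma inS_uminus: "inS \<chi> a \<Longrightarrow> inS \<chi> (- a)"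
  unfolding inS_def by simp
lemma inS_diff: "inS \<chi> a \<Longrightarrow> inS \<chi> b \<Longrightarrow> inS \<chi> (a - b)"
  using inS_add inS_uminus by (metis diff_conv_add_uminus)
lemma inS_mult: assumes "inS \<chi> a" "inS \<chi> b" shows "inS \<chi> (a * b)"
  unfolding inS_def
proof
  fix k assume "k \<in> Poly_Mapping.keys (a * b)"
  then obtain x y where "k = x + y" "x \<in> Poly_Mapping.keys a" "y \<in> Poly_Mapping.keys b"
    using keys_mult by blast
  with assms show "fst k = 0 \<and> chiw \<chi> (snd k) 0 = 1"
    unfolding inS_def by (auto simp: plus_list_def chiw_append)
qed
lemma inS_single: "chiw \<chi> w 0 = 1 \<Longrightarrow> inS \<chi> (Poly_Mapping.single (0,w) c)"
  by (simp add: inS_def)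
lemma inS_sc: "inS \<chi> (sc c)"
  unfolding sc_def zero_prod_def zero_list_def by (rule inS_single) (simp add: chiw_def)
lemma inS_smul: "inS \<chi> a \<Longrightarrow> inS \<chi> (smul c a)"
  unfolding smul_def by (simp add: inS_mult inS_sc)
lemma sc_one: "sc 1 = 1" by (simp add: sc_def)
lemma inS_1: "inS \<chi> 1"
  using inS_sc[of \<chi> 1] by (simp only: sc_one)

lemma gscal_eq: "inS \<chi> b \<Longrightarrow> gscal \<chi> c b = smul c b"
proof -
  assume b: "inS \<chi> b"
  have "gscal \<chi> c b = gmult \<chi> (sc c) b" by (simp add: gscal_def sc_def zero_prod_def zero_list_def)
  then show ?thesis unfolding smul_def using gmult_eq[OF inS_sc b] by simp
qed

definition Sp :: "(nat \<Rightarrow> 'g::ab_group_add \<Rightarrow> 'k::field) \<Rightarrow> ('g,'k) galg \<times> nat list \<Rightarrow> bool" where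
  "Sp \<chi> e \<longleftrightarrow> inS \<chi> (fst e)"

lemma sbr_fst: "Sp \<chi> a \<Longrightarrow> Sp \<chi> b \<Longrightarrow>
   fst (sbr g \<chi> a b) = brk (fst a) (fst b) (pdeg g \<chi> (snd a) (snd b))"
  unfolding Sp_def sbr_def brk_def
  by (simp add: gmult_eq gscal_eq inS_mult)
lemma sbr_snd: "snd (sbr g \<chi> a b) = snd a @ snd b"
  by (simp add: sbr_def)
lemma Sp_sbr: "Sp \<chi> a \<Longrightarrow> Sp \<chi> b \<Longrightarrow> Sp \<chi> (sbr g \<chi> a b)"
  using sbr_fst[of \<chi> a b g] unfolding Sp_def brk_def
  by (simp add: inS_diff inS_mult inS_smul)

definition J :: "(nat \<Rightarrow> 'g::ab_group_add \<Rightarrow> 'k::field) \<Rightarrow> ('g,'k) galg set \<Rightarrow> ('g,'k) galg \<Rightarrow> bool" where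
  "J \<chi> R x \<longleftrightarrow> x \<in> gideal \<chi> R \<and> inS \<chi> x"

lemma J_0: "J \<chi> R 0" by (simp add: J_def gi_zero)
lemma J_gen: "r \<in> R \<Longrightarrow> inS \<chi> r \<Longrightarrow> J \<chi> R r" by (simp add: J_def gi_gen)
lemma J_add: "J \<chi> R x \<Longrightarrow> J \<chi> R y \<Longrightarrow> J \<chi> R (x + y)"
  by (simp add: J_def gi_add inS_add)
lemma J_mult: "J \<chi> R x \<Longrightarrow> inS \<chi> u \<Longrightarrow> inS \<chi> v \<Longrightarrow> J \<chi> R (u * x * v)"
  unfolding J_def using gi_mult[of x \<chi> R u v] by (simp add: gmult_eq inS_mult)
lemma J_left: "J \<chi> R x \<Longrightarrow> inS \<chi> u \<Longrightarrow> J \<chi> R (u * x)"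
  by (metis J_mult inS_1 mult_1_right)
lemma J_right: "J \<chi> R x \<Longrightarrow> inS \<chi> v \<Longrightarrow> J \<chi> R (x * v)"
  by (metis J_mult inS_1 mult_1_left)
lemma J_smul: "J \<chi> R x \<Longrightarrow> J \<chi> R (smul c x)"
  unfolding smul_def using J_left inS_sc by blast
lemma J_uminus: "J \<chi> R x \<Longrightarrow> J \<chi> R (- x)"
proof -
  assume "J \<chi> R x"
  then have "J \<chi> R (smul (-1) x)" by (rule J_smul)
  moreover have "smul (-1) x = - x" by (simp add: smul_def sc_def single_uminus)
  ultimately show ?thesis by metis
qed
lemma J_diff: "J \<chi> R x \<Longrightarrow> J \<chi> R y \<Longrightarrow> J \<chi> R (x - y)"
  unfolding diff_conv_add_uminus by (intro J_add J_uminus)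


definition eqv :: "(nat \<Rightarrow> 'g::ab_group_add \<Rightarrow> 'k::field) \<Rightarrow> ('g,'k) galg set \<Rightarrow> ('g,'k) galg \<times> nat list \<Rightarrow> ('g,'k) galg \<times> nat list \<Rightarrow> bool" where
  "eqv \<chi> R a b \<longleftrightarrow> J \<chi> R (fst a - fst b) \<and> snd a = snd b"

lemma eqv_refl: "eqv \<chi> R a a" by (simp add: eqv_def J_0)
lemma eqv_sym: "eqv \<chi> R a b \<Longrightarrow> eqv \<chi> R b a"
  unfolding eqv_def using J_uminus by fastforce
lemma eqv_trans: "eqv \<chi> R a b \<Longrightarrow> eqv \<chi> R b c \<Longrightarrow> eqv \<chi> R a c"
  unfolding eqv_def using J_add by fastforce
lemma eqv_J: "eqv \<chi> R a b \<Longrightarrow> J \<chi> R (fst a) \<Longrightarrow> J \<chi> R (fst b)"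
  unfolding eqv_def using J_diff[of \<chi> R "fst a" "fst a - fst b"] by simp

lemma brk_cong_id: fixes A A' B B' :: "('g::ab_group_add,'k::field) galg"
  shows "brk A B p - brk A' B' p = (A - A')*B + A'*(B-B') - smul p ((B-B')*A + B'*(A-A'))"
  unfolding brk_def by (simp add: algebra_simps scs)

lemma sbr_cong:
  assumes "Sp \<chi> a" "Sp \<chi> a'" "Sp \<chi> b" "Sp \<chi> b'" "eqv \<chi> R a a'" "eqv \<chi> R b b'"
  shows "eqv \<chi> R (sbr g \<chi> a b) (sbr g \<chi> a' b')"
proof -
  have s: "snd a = snd a'" "snd b = snd b'" using assms(5,6) by (auto simp: eqv_def)
  have j: "J \<chi> R (fst a - fst a')" "J \<chi> R (fst b - fst b')" using assms(5,6) by (auto simp: eqv_def)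
  have i: "inS \<chi> (fst a)" "inS \<chi> (fst a')" "inS \<chi> (fst b)" "inS \<chi> (fst b')"
    using assms(1-4) by (auto simp: Sp_def)
  have "J \<chi> R ((fst a - fst a')*fst b + fst a'*(fst b-fst b') - smul (pdeg g \<chi> (snd a) (snd b)) ((fst b-fst b')*fst a + fst b'*(fst a-fst a')))"
    using J_right[OF j(1) i(3)] J_left[OF j(2) i(2)] J_right[OF j(2) i(1)] J_left[OF j(1) i(4)]
    by (intro J_diff J_add J_smul)
  then show ?thesis
    unfolding eqv_def using assms(1-4) s
    by (simp add: sbr_fst sbr_snd brk_cong_id)
qed

lemma A_rule:
  assumes "Sp \<chi> u" "Sp \<chi> v" "Sp \<chi> w" "J \<chi> R (fst (sbr g \<chi> u w))"
  shows "eqv \<chi> R (sbr g \<chi> (sbr g \<chi> u v) w) (sbr g \<chi> u (sbr g \<chi> v w))"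
proof -
  let ?X = "brk (fst u) (fst w) (pdeg g \<chi> (snd u) (snd w))"
  have X: "J \<chi> R ?X" using assms by (simp add: sbr_fst)
  have i: "inS \<chi> (fst u)" "inS \<chi> (fst v)" "inS \<chi> (fst w)" using assms(1-3) by (auto simp: Sp_def)
  have "J \<chi> R (- smul (pdeg g \<chi> (snd u) (snd v)) (fst v * ?X) + smul (pdeg g \<chi> (snd v) (snd w)) (?X * fst v))"
    using X i by (intro J_add J_uminus J_smul J_left J_right) auto
  then show ?thesis
    unfolding eqv_def using assms(1-3)
    by (simp add: sbr_fst sbr_snd Sp_sbr pdeg_append1 pdeg_append2 brk_def idA)
qed

lemma L1_rule:
  assumes "Sp \<chi> u" "Sp \<chi> v" "Sp \<chi> w" "J \<chi> R (fst (sbr g \<chi> u v))" "J \<chi> R (fst (sbr g \<chi> u w))"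
  shows "J \<chi> R (fst (sbr g \<chi> u (sbr g \<chi> v w)))"
proof -
  let ?X = "brk (fst u) (fst v) (pdeg g \<chi> (snd u) (snd v))"
  let ?Y = "brk (fst u) (fst w) (pdeg g \<chi> (snd u) (snd w))"
  have X: "J \<chi> R ?X" "J \<chi> R ?Y" using assms by (simp_all add: sbr_fst)
  have i: "inS \<chi> (fst u)" "inS \<chi> (fst v)" "inS \<chi> (fst w)" using assms(1-3) by (auto simp: Sp_def)
  have "J \<chi> R (?X * fst w + smul (pdeg g \<chi> (snd u) (snd v)) (fst v * ?Y)
     - smul (pdeg g \<chi> (snd v) (snd w)) (?Y * fst v + smul (pdeg g \<chi> (snd u) (snd w)) (fst w * ?X)))"
    using X i by (intro J_add J_diff J_smul J_left J_right) auto
  then show ?thesis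
    using assms(1-3)
    by (simp add: sbr_fst sbr_snd Sp_sbr pdeg_append1 pdeg_append2 brk_def idL1)
qed

lemma L2_rule:
  assumes "Sp \<chi> u" "Sp \<chi> v" "Sp \<chi> w" "J \<chi> R (fst (sbr g \<chi> v u))" "J \<chi> R (fst (sbr g \<chi> w u))"
  shows "J \<chi> R (fst (sbr g \<chi> (sbr g \<chi> v w) u))"
proof -
  let ?X = "brk (fst v) (fst u) (pdeg g \<chi> (snd v) (snd u))"
  let ?Y = "brk (fst w) (fst u) (pdeg g \<chi> (snd w) (snd u))"
  have X: "J \<chi> R ?X" "J \<chi> R ?Y" using assms by (simp_all add: sbr_fst)
  have i: "inS \<chi> (fst u)" "inS \<chi> (fst v)" "inS \<chi> (fst w)" using assms(1-3) by (auto simp: Sp_def)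
  have "J \<chi> R (fst v * ?Y + smul (pdeg g \<chi> (snd w) (snd u)) (?X * fst w)
     - smul (pdeg g \<chi> (snd v) (snd w)) (fst w * ?X + smul (pdeg g \<chi> (snd v) (snd u)) (?Y * fst v)))"
    using X i by (intro J_add J_diff J_smul J_left J_right) auto
  then show ?thesis
    using assms(1-3)
    by (simp add: sbr_fst sbr_snd Sp_sbr pdeg_append1 pdeg_append2 brk_def idL2)
qed

lemma Jbrk_left: "Sp \<chi> x \<Longrightarrow> Sp \<chi> c \<Longrightarrow> J \<chi> R (fst x) \<Longrightarrow> J \<chi> R (fst (sbr g \<chi> x c))"
  by (simp add: sbr_fst brk_def Sp_def J_diff J_smul J_left J_right)

lemma smul_uminus_c: "smul (- c) x = - smul c x"
  by (simp add: smul_def sc_def single_uminus)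

lemma swap_rule:
  assumes "Sp \<chi> u" "Sp \<chi> v" "pdeg g \<chi> (snd v) (snd u) * pdeg g \<chi> (snd u) (snd v) = 1"
    "J \<chi> R (fst (sbr g \<chi> u v))"
  shows "J \<chi> R (fst (sbr g \<chi> v u))"
proof -
  have "J \<chi> R (smul (- pdeg g \<chi> (snd v) (snd u)) (fst (sbr g \<chi> u v)))" using assms(4) by (rule J_smul)
  moreover have "smul (- pdeg g \<chi> (snd v) (snd u)) (fst (sbr g \<chi> u v)) = fst (sbr g \<chi> v u)"
  proof -
    have "smul (- pdeg g \<chi> (snd v) (snd u)) (fst (sbr g \<chi> u v))
      = - smul (pdeg g \<chi> (snd v) (snd u)) (fst u * fst v) + smul (pdeg g \<chi> (snd v) (snd u) * pdeg g \<chi> (snd u) (snd v)) (fst v * fst u)"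
      using assms(1,2) by (simp add: sbr_fst brk_def smul_diff smul_smul smul_uminus_c)
    also have "\<dots> = fst (sbr g \<chi> v u)" using assms(1-3) by (simp add: sbr_fst brk_def)
    finally show ?thesis .
  qed
  ultimately show ?thesis by metis
qed



declare eqv_trans[trans]

definition Pr :: "(nat \<Rightarrow> 'g::ab_group_add) \<Rightarrow> (nat \<Rightarrow> 'g \<Rightarrow> 'k::field) \<Rightarrow> ('g,'k) galg set \<Rightarrow> ('g,'k) galg \<times> nat list \<Rightarrow> ('g,'k) galg \<times> nat list \<Rightarrow> bool" where
  "Pr g \<chi> R u w \<longleftrightarrow> J \<chi> R (fst (sbr g \<chi> u w))"

fun goodl :: "(nat \<Rightarrow> 'g::ab_group_add) \<Rightarrow> (nat \<Rightarrow> 'g \<Rightarrow> 'k::field) \<Rightarrow> ('g,'k) galg set \<Rightarrow> (('g,'k) galg \<times> nat list) list \<Rightarrow> bool" where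
  "goodl g \<chi> R [] = True"
| "goodl g \<chi> R (a # zs) = ((\<forall>z\<in>set (drop 1 zs). Pr g \<chi> R a z) \<and> goodl g \<chi> R zs)"

lemma rnest_Sp: "zs \<noteq> [] \<Longrightarrow> \<forall>z\<in>set zs. Sp \<chi> z \<Longrightarrow> Sp \<chi> (rnest g \<chi> zs)"
  by (induction g \<chi> zs rule: rnest.induct) (auto simp: Sp_sbr)

lemma P_rnest: "zs \<noteq> [] \<Longrightarrow> Sp \<chi> u \<Longrightarrow> \<forall>z\<in>set zs. Sp \<chi> z \<Longrightarrow> \<forall>z\<in>set zs. Pr g \<chi> R u z
   \<Longrightarrow> Pr g \<chi> R u (rnest g \<chi> zs)"
proof (induction g \<chi> zs rule: rnest.induct)
  case (3 g \<chi> a b zs)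
  then show ?case unfolding Pr_def
    by (simp del: rnest.simps add: rnest.simps(3)) (intro L1_rule rnest_Sp; auto simp: Pr_def)
qed auto

lemma P_rnest_append: "ys \<noteq> [] \<Longrightarrow> Sp \<chi> u \<Longrightarrow> \<forall>z\<in>set (xs @ ys). Sp \<chi> z \<Longrightarrow> \<forall>z\<in>set xs. Pr g \<chi> R u z
   \<Longrightarrow> Pr g \<chi> R u (rnest g \<chi> ys) \<Longrightarrow> Pr g \<chi> R u (rnest g \<chi> (xs @ ys))"
proof (induction xs)
  case (Cons x xs)
  have "rnest g \<chi> (x # xs @ ys) = sbr g \<chi> x (rnest g \<chi> (xs @ ys))"
    using Cons.prems(1) by (cases "xs @ ys") auto
  with Cons show ?case unfolding Pr_def
    by (simp del: rnest.simps) (intro L1_rule rnest_Sp; auto simp: Pr_def)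
qed auto

lemma goodl_appendD: "goodl g \<chi> R (xs @ ys) \<Longrightarrow> goodl g \<chi> R xs \<and> goodl g \<chi> R ys"
proof (induction xs)
  case (Cons x xs)
  then show ?case by (cases xs) auto
qed auto

lemma merge:
  "Ls \<noteq> [] \<Longrightarrow> Rs \<noteq> [] \<Longrightarrow> goodl g \<chi> R (Ls @ Rs) \<Longrightarrow> \<forall>z\<in>set (Ls @ Rs). Sp \<chi> z \<Longrightarrow>
   eqv \<chi> R (sbr g \<chi> (rnest g \<chi> Ls) (rnest g \<chi> Rs)) (rnest g \<chi> (Ls @ Rs))"
proof (induction Ls)
  case Nil then show ?case by simp
next
  case (Cons a Ls)
  show ?case
  proof (cases Ls)
    case Nil
    then show ?thesis using Cons.prems by (cases Rs) (auto simp: eqv_refl)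
  next
    case (Cons b L2)
    note ab = Cons
    have sp: "\<forall>z\<in>set (Ls @ Rs). Sp \<chi> z" "Sp \<chi> a" using Cons.prems(4) by auto
    have gd: "goodl g \<chi> R (Ls @ Rs)" using Cons.prems(3) by simp
    have IH: "eqv \<chi> R (sbr g \<chi> (rnest g \<chi> Ls) (rnest g \<chi> Rs)) (rnest g \<chi> (Ls @ Rs))"
      using Cons.IH ab Cons.prems sp gd by auto
    have Pa: "Pr g \<chi> R a (rnest g \<chi> Rs)"
    proof (rule P_rnest)
      show "\<forall>z\<in>set Rs. Pr g \<chi> R a z" using Cons.prems(3) ab by auto
    qed (use Cons.prems sp in auto)
    have r1: "rnest g \<chi> (a # Ls) = sbr g \<chi> a (rnest g \<chi> Ls)" using ab by simp
    have r2: "rnest g \<chi> (a # Ls @ Rs) = sbr g \<chi> a (rnest g \<chi> (Ls @ Rs))" using ab by simp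
    have spL: "Sp \<chi> (rnest g \<chi> Ls)" "Sp \<chi> (rnest g \<chi> Rs)" "Sp \<chi> (rnest g \<chi> (Ls @ Rs))"
      using sp ab Cons.prems(2) by (auto intro!: rnest_Sp)
    have "eqv \<chi> R (sbr g \<chi> (sbr g \<chi> a (rnest g \<chi> Ls)) (rnest g \<chi> Rs)) (sbr g \<chi> a (sbr g \<chi> (rnest g \<chi> Ls) (rnest g \<chi> Rs)))"
      using Pa sp spL by (intro A_rule) (auto simp: Pr_def)
    also have "eqv \<chi> R (sbr g \<chi> a (sbr g \<chi> (rnest g \<chi> Ls) (rnest g \<chi> Rs))) (sbr g \<chi> a (rnest g \<chi> (Ls @ Rs)))"
      using IH sp spL by (intro sbr_cong eqv_refl Sp_sbr) auto
    finally show ?thesis using r1 r2 by simp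
  qed
qed


lemma leaves_ne: "leaves t \<noteq> []" by (induction t) auto

lemma tree_eqv: "goodl g \<chi> R (leaves t) \<Longrightarrow> \<forall>z\<in>set (leaves t). Sp \<chi> z \<Longrightarrow>
   eqv \<chi> R (bval (sbr g \<chi>) t) (rnest g \<chi> (leaves t)) \<and> Sp \<chi> (bval (sbr g \<chi>) t)"
proof (induction t)
  case (Lf a) then show ?case by (simp add: eqv_refl)
next
  case (Nd l r)
  have "goodl g \<chi> R (leaves l @ leaves r)" using Nd.prems(1) by simp
  then have gl: "goodl g \<chi> R (leaves l)" "goodl g \<chi> R (leaves r)" using goodl_appendD by blast+
  have IHl: "eqv \<chi> R (bval (sbr g \<chi>) l) (rnest g \<chi> (leaves l))" "Sp \<chi> (bval (sbr g \<chi>) l)"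
    using Nd.IH(1) gl Nd.prems(2) by auto
  have IHr: "eqv \<chi> R (bval (sbr g \<chi>) r) (rnest g \<chi> (leaves r))" "Sp \<chi> (bval (sbr g \<chi>) r)"
    using Nd.IH(2) gl Nd.prems(2) by auto
  have sp: "Sp \<chi> (rnest g \<chi> (leaves l))" "Sp \<chi> (rnest g \<chi> (leaves r))"
    using Nd.prems(2) leaves_ne by (auto intro!: rnest_Sp)
  have "eqv \<chi> R (bval (sbr g \<chi>) (Nd l r)) (sbr g \<chi> (rnest g \<chi> (leaves l)) (rnest g \<chi> (leaves r)))"
    using IHl IHr sp by (simp add: sbr_cong)
  also have "eqv \<chi> R \<dots> (rnest g \<chi> (leaves (Nd l r)))"
    using merge[of "leaves l" "leaves r" g \<chi> R, OF leaves_ne leaves_ne] Nd.prems by simp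
  finally show ?case using IHl IHr by (simp add: Sp_sbr)
qed

lemma goodl_nth: "(\<And>i j. i + 1 < j \<Longrightarrow> j < length zs \<Longrightarrow> Pr g \<chi> R (zs ! i) (zs ! j)) \<Longrightarrow> goodl g \<chi> R zs"
proof (induction zs)
  case (Cons a zs)
  have "\<forall>z\<in>set (drop 1 zs). Pr g \<chi> R a z"
  proof
    fix z assume "z \<in> set (drop 1 zs)"
    then obtain j where j: "j < length (drop 1 zs)" "z = drop 1 zs ! j" by (auto simp: in_set_conv_nth)
    then have "z = (a # zs) ! (j + 2)" "j + 2 < length (a # zs)" by auto
    then show "Pr g \<chi> R a z" using Cons.prems[of 0 "j+2"] by simp
  qed
  moreover have "goodl g \<chi> R zs"
    using Cons.prems[of "Suc _" "Suc _"] by (intro Cons.IH) auto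
  ultimately show ?case by simp
qed simp



lemma core2:
  fixes \<alpha> \<beta> :: nat and q r1 :: "'k::field"
  assumes dist: "\<alpha> \<noteq> \<beta>" and nz: "q \<noteq> 0" "r1 \<noteq> 0"
  defines "a \<equiv> Poly_Mapping.single (0::'g::ab_group_add, [\<alpha>]) (1::'k)"
    and "b \<equiv> Poly_Mapping.single (0::'g, [\<beta>]) (1::'k)"
  shows "brk b (brk b a (inverse q * inverse r1)) (q * (inverse q * inverse r1))
    = smul (inverse q * inverse r1 * inverse r1) (brk (brk a b r1) b (r1*q))"
  unfolding a_def b_def
  apply (simp only: expand)
  apply (rule poly_mapping_eqI)
  apply (simp only: lookup_add lookup_minus lookup_uminus lookup_single when_def)
  subgoal for k
  proof -
    have ds: "\<alpha> \<noteq> \<beta>" "\<beta> \<noteq> \<alpha>" using dist by auto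
    show ?thesis
    proof (cases "k \<in> Pair 0 ` set [[\<alpha>,\<beta>,\<beta>],[\<beta>,\<alpha>,\<beta>],[\<beta>,\<beta>,\<alpha>]]")
      case True
      then show ?thesis
        apply (simp only: set_simps image_insert image_empty insert_iff empty_iff)
        apply (elim disjE)
        apply (simp_all add: ds)
        using nz apply (simp_all add: field_simps)
        done
    next
      case False
      then have "\<forall>w\<in>set [[\<alpha>,\<beta>,\<beta>],[\<beta>,\<alpha>,\<beta>],[\<beta>,\<beta>,\<alpha>]]. (0,w) \<noteq> k" by auto
      then show ?thesis by simp
    qed
  qed
  done

lemma rnest_Cons: "zs \<noteq> [] \<Longrightarrow> rnest g \<chi> (a # zs) = sbr g \<chi> a (rnest g \<chi> zs)"
  by (cases zs) auto

lemma Sp_sbrs: "Sp \<chi> a \<Longrightarrow> Sp \<chi> b \<Longrightarrow> Sp \<chi> (sbr g \<chi> a b)" by (rule Sp_sbr)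

lemma push1:
  assumes sp: "Sp \<chi> a" "Sp \<chi> b" "Sp \<chi> d" "Sp \<chi> c"
    and Pb: "Pr g \<chi> R b c" and Pd: "Pr g \<chi> R d c"
    and core: "J \<chi> R (fst (sbr g \<chi> b (sbr g \<chi> d (sbr g \<chi> b a))))"
  shows "Pr g \<chi> R b (sbr g \<chi> d (sbr g \<chi> b (sbr g \<chi> a c)))"
proof -
  note S = Sp_sbr[of \<chi>]
  have e1: "eqv \<chi> R (sbr g \<chi> b (sbr g \<chi> a c)) (sbr g \<chi> (sbr g \<chi> b a) c)"
    using Pb sp by (intro eqv_sym[OF A_rule]) (auto simp: Pr_def)
  have e2: "eqv \<chi> R (sbr g \<chi> d (sbr g \<chi> b (sbr g \<chi> a c))) (sbr g \<chi> d (sbr g \<chi> (sbr g \<chi> b a) c))"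
    by (rule sbr_cong[OF _ _ _ _ eqv_refl e1]) (use sp in \<open>auto intro: S\<close>)
  have e3: "eqv \<chi> R (sbr g \<chi> d (sbr g \<chi> (sbr g \<chi> b a) c)) (sbr g \<chi> (sbr g \<chi> d (sbr g \<chi> b a)) c)"
    using Pd sp by (intro eqv_sym[OF A_rule] S) (auto simp: Pr_def)
  have e4: "eqv \<chi> R (sbr g \<chi> b (sbr g \<chi> d (sbr g \<chi> b (sbr g \<chi> a c)))) (sbr g \<chi> b (sbr g \<chi> (sbr g \<chi> d (sbr g \<chi> b a)) c))"
    by (rule sbr_cong[OF _ _ _ _ eqv_refl eqv_trans[OF e2 e3]]) (use sp in \<open>auto intro: S\<close>)
  have e5: "eqv \<chi> R (sbr g \<chi> b (sbr g \<chi> (sbr g \<chi> d (sbr g \<chi> b a)) c)) (sbr g \<chi> (sbr g \<chi> b (sbr g \<chi> d (sbr g \<chi> b a))) c)"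
    using Pb sp by (intro eqv_sym[OF A_rule] S) (auto simp: Pr_def)
  have "J \<chi> R (fst (sbr g \<chi> (sbr g \<chi> b (sbr g \<chi> d (sbr g \<chi> b a))) c))"
    by (rule Jbrk_left[OF _ _ core]) (use sp in \<open>auto intro: S\<close>)
  then show ?thesis unfolding Pr_def
    using eqv_sym[OF eqv_trans[OF e4 e5]] eqv_J by blast
qed

lemma push2:
  assumes sp: "Sp \<chi> a" "Sp \<chi> b" "Sp \<chi> c"
    and Pb: "Pr g \<chi> R b c"
    and core: "J \<chi> R (fst (sbr g \<chi> b (sbr g \<chi> b a)))"
  shows "Pr g \<chi> R b (sbr g \<chi> b (sbr g \<chi> a c))"
proof -
  note S = Sp_sbr[of \<chi>]
  have e1: "eqv \<chi> R (sbr g \<chi> b (sbr g \<chi> a c)) (sbr g \<chi> (sbr g \<chi> b a) c)"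
    using Pb sp by (intro eqv_sym[OF A_rule]) (auto simp: Pr_def)
  have e2: "eqv \<chi> R (sbr g \<chi> b (sbr g \<chi> b (sbr g \<chi> a c))) (sbr g \<chi> b (sbr g \<chi> (sbr g \<chi> b a) c))"
    by (rule sbr_cong[OF _ _ _ _ eqv_refl e1]) (use sp in \<open>auto intro: S\<close>)
  have e3: "eqv \<chi> R (sbr g \<chi> b (sbr g \<chi> (sbr g \<chi> b a) c)) (sbr g \<chi> (sbr g \<chi> b (sbr g \<chi> b a)) c)"
    using Pb sp by (intro eqv_sym[OF A_rule] S) (auto simp: Pr_def)
  have "J \<chi> R (fst (sbr g \<chi> (sbr g \<chi> b (sbr g \<chi> b a)) c))"
    by (rule Jbrk_left[OF _ _ core]) (use sp in \<open>auto intro: S\<close>)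
  then show ?thesis unfolding Pr_def
    using eqv_sym[OF eqv_trans[OF e2 e3]] eqv_J by blast
qed



locale spset =
  fixes n :: nat and q :: "'k::field" and g :: "nat \<Rightarrow> 'g::ab_group_add" and \<chi> :: "nat \<Rightarrow> 'g \<Rightarrow> 'k"
  assumes n2: "n \<ge> 2"
    and chi_hom: "\<And>i a b. 1 \<le> i \<Longrightarrow> i \<le> n \<Longrightarrow> \<chi> i (a + b) = \<chi> i a * \<chi> i b"
    and chi_nz: "\<And>i a. 1 \<le> i \<Longrightarrow> i \<le> n \<Longrightarrow> \<chi> i a \<noteq> 0"
    and q_nz: "q \<noteq> 0" and qm1: "q \<noteq> -1"
    and pii: "\<And>i. 1 \<le> i \<Longrightarrow> i < n \<Longrightarrow> \<chi> i (g i) = q"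
    and padj: "\<And>i. 1 < i \<Longrightarrow> i < n \<Longrightarrow> \<chi> i (g (i-1)) * \<chi> (i-1) (g i) = inverse q"
    and pfar: "\<And>i j. 1 \<le> i \<Longrightarrow> i + 1 < j \<Longrightarrow> j \<le> n \<Longrightarrow> \<chi> i (g j) * \<chi> j (g i) = 1"
begin

abbreviation "RR \<equiv> sp_rels n g \<chi>"

lemma chi0: "1 \<le> i \<Longrightarrow> i \<le> n \<Longrightarrow> \<chi> i 0 = 1"
  using chi_hom[of i 0 0] chi_nz[of i 0] by simp

lemma Sp_xg: "1 \<le> i \<Longrightarrow> i \<le> n \<Longrightarrow> Sp \<chi> (xg i)"
  unfolding Sp_def xg_def by (simp add: inS_single chiw_def chi0)

lemma inS_xg: "1 \<le> i \<Longrightarrow> i \<le> n \<Longrightarrow> inS \<chi> (Poly_Mapping.single (0, [i]) 1)"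
  using Sp_xg by (simp add: Sp_def xg_def)

lemma pd11: "pdeg g \<chi> [x] [y] = \<chi> x (g y)" by (simp add: pdeg_def)
lemma pd12: "pdeg g \<chi> [x] [y, z] = \<chi> x (g y) * \<chi> x (g z)" by (simp add: pdeg_def)
lemma pd13: "pdeg g \<chi> [x] [y, z, w] = \<chi> x (g y) * \<chi> x (g z) * \<chi> x (g w)" by (simp add: pdeg_def mult.assoc)
lemma pd21: "pdeg g \<chi> [x, y] [z] = \<chi> x (g z) * \<chi> y (g z)" by (simp add: pdeg_def)

lemmas pds = pd11 pd12 pd13 pd21

lemma fst_xg: "fst (xg i) = Poly_Mapping.single (0, [i]) 1" by (simp add: xg_def)
lemma snd_xg: "snd (xg i) = [i]" by (simp add: xg_def)

lemma rel_far: "1 \<le> i \<Longrightarrow> i + 1 < j \<Longrightarrow> j \<le> n \<Longrightarrow> Pr g \<chi> RR (xg i) (xg j)"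
  unfolding Pr_def
proof (rule J_gen)
  assume a: "1 \<le> i" "i + 1 < j" "j \<le> n"
  show "fst (sbr g \<chi> (xg i) (xg j)) \<in> RR" unfolding sp_rels_def using a by blast
  show "inS \<chi> (fst (sbr g \<chi> (xg i) (xg j)))" using a Sp_sbr Sp_xg unfolding Sp_def
    by (metis add_leD1 dual_order.trans le_add2 less_imp_le_nat)
qed

lemma rel_far': "1 \<le> j \<Longrightarrow> j + 1 < i \<Longrightarrow> i \<le> n \<Longrightarrow> Pr g \<chi> RR (xg i) (xg j)"
  unfolding Pr_def
proof (rule swap_rule)
  assume a: "1 \<le> j" "j + 1 < i" "i \<le> n"
  show "Sp \<chi> (xg j)" "Sp \<chi> (xg i)" using a Sp_xg by auto
  show "pdeg g \<chi> (snd (xg i)) (snd (xg j)) * pdeg g \<chi> (snd (xg j)) (snd (xg i)) = 1"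
    using pfar[of j i] a by (simp add: snd_xg pds mult.commute)
  show "J \<chi> RR (fst (sbr g \<chi> (xg j) (xg i)))" using rel_far[of j i] a by (simp add: Pr_def)
qed

lemma J_core1:
  assumes i: "2 \<le> i" "i + 2 \<le> n"
  shows "J \<chi> RR (fst (sbr g \<chi> (xg i) (sbr g \<chi> (xg (i+1)) (sbr g \<chi> (xg i) (xg (i-1))))))"
proof -
  define r1 where "r1 = \<chi> (i-1) (g i)"
  define r2 where "r2 = \<chi> i (g (i+1))"
  define r3 where "r3 = \<chi> (i-1) (g (i+1))"
  define t where "t = inverse (q + 1)"
  define a where "a = (Poly_Mapping.single (0, [i-1]) 1 :: ('g,'k) galg)"
  define b where "b = (Poly_Mapping.single (0, [i]) 1 :: ('g,'k) galg)"
  define d where "d = (Poly_Mapping.single (0, [i+1]) 1 :: ('g,'k) galg)"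
  have nz: "r1 \<noteq> 0" "r2 \<noteq> 0" "r3 \<noteq> 0" unfolding r1_def r2_def r3_def using i chi_nz by auto
  have ht: "t * (q + 1) = 1" unfolding t_def using qm1
    by (metis add_eq_0_iff eq_neg_iff_add_eq_0 left_inverse)
  have q: "\<chi> i (g i) = q" using pii i by auto
  have pba: "\<chi> i (g (i-1)) = inverse q * inverse r1"
    using padj[of i] i nz q_nz unfolding r1_def by (simp add: field_simps)
  have pdb: "\<chi> (i+1) (g i) = inverse q * inverse r2"
    using padj[of "i+1"] i nz q_nz unfolding r2_def by (simp add: field_simps)
  have pda: "\<chi> (i+1) (g (i-1)) = inverse r3"
    using pfar[of "i-1" "i+1"] i nz unfolding r3_def by (simp add: field_simps)
  have sp: "Sp \<chi> (xg (i-1))" "Sp \<chi> (xg i)" "Sp \<chi> (xg (i+1))" using i Sp_xg by auto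
  have iS: "inS \<chi> a" "inS \<chi> b" "inS \<chi> d" using sp by (simp_all add: Sp_def xg_def a_def b_def d_def)
  have "fst (sbr g \<chi> (xg i) (sbr g \<chi> (xg (i+1)) (sbr g \<chi> (xg i) (xg (i-1)))))
     = brk b (brk d (brk b a (\<chi> i (g (i-1)))) (\<chi> (i+1) (g i) * \<chi> (i+1) (g (i-1)))) (\<chi> i (g (i+1)) * \<chi> i (g i) * \<chi> i (g (i-1)))"
    using sp by (simp add: sbr_fst sbr_snd Sp_sbr fst_xg snd_xg pds a_def b_def d_def)
  also have "\<dots> = brk b (brk d (brk b a (inverse q * inverse r1)) (inverse q * inverse r2 * inverse r3)) (r2*q*(inverse q * inverse r1))"
    by (simp only: pba pdb pda q r2_def[symmetric])
  finally have LHS: "fst (sbr g \<chi> (xg i) (sbr g \<chi> (xg (i+1)) (sbr g \<chi> (xg i) (xg (i-1)))))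
     = brk b (brk d (brk b a (inverse q * inverse r1)) (inverse q * inverse r2 * inverse r3)) (r2*q*(inverse q * inverse r1))" .
  have R1: "fst (sbr g \<chi> (xg i) (sbr g \<chi> (xg i) (xg (i+1)))) = brk b (brk b d r2) (q*r2)"
    using sp by (simp add: sbr_fst sbr_snd Sp_sbr fst_xg snd_xg pds q b_def d_def r2_def)
  have R2: "fst (sbr g \<chi> (sbr g \<chi> (xg (i-1)) (xg i)) (xg i)) = brk (brk a b r1) b (r1*q)"
    using sp by (simp add: sbr_fst sbr_snd Sp_sbr fst_xg snd_xg pds q a_def b_def r1_def)
  have R3: "fst (sbr g \<chi> (xg (i-1)) (xg (i+1))) = brk a d r3"
    using sp by (simp add: sbr_fst sbr_snd Sp_sbr fst_xg snd_xg pds a_def d_def r3_def)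
  have JR1: "J \<chi> RR (brk b (brk b d r2) (q*r2))"
    unfolding R1[symmetric]
  proof (rule J_gen)
    show "fst (sbr g \<chi> (xg i) (sbr g \<chi> (xg i) (xg (i+1)))) \<in> RR" unfolding sp_rels_def using i by auto
    show "inS \<chi> (fst (sbr g \<chi> (xg i) (sbr g \<chi> (xg i) (xg (i+1)))))" using Sp_def by (metis Sp_sbr sp)
  qed
  have JR2: "J \<chi> RR (brk (brk a b r1) b (r1*q))"
    unfolding R2[symmetric]
  proof (rule J_gen)
    have "fst (sbr g \<chi> (sbr g \<chi> (xg (i-1)) (xg ((i-1)+1))) (xg ((i-1)+1))) \<in> RR"
      unfolding sp_rels_def by (rule UnI1, rule UnI1, rule UnI1, rule UnI2, rule CollectI, rule exI[of _ "i-1"]) (use i in auto)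
    then show "fst (sbr g \<chi> (sbr g \<chi> (xg (i-1)) (xg i)) (xg i)) \<in> RR" using i by simp
    show "inS \<chi> (fst (sbr g \<chi> (sbr g \<chi> (xg (i-1)) (xg i)) (xg i)))" using Sp_def by (metis Sp_sbr sp)
  qed
  have JR3: "J \<chi> RR (brk a d r3)"
    unfolding R3[symmetric]
  proof (rule J_gen)
    have "fst (sbr g \<chi> (xg (i-1)) (xg (i+1))) \<in> RR"
      unfolding sp_rels_def using i by (intro UnI1 UnI2) force
    then show "fst (sbr g \<chi> (xg (i-1)) (xg (i+1))) \<in> RR" .
    show "inS \<chi> (fst (sbr g \<chi> (xg (i-1)) (xg (i+1))))" using Sp_def by (metis Sp_sbr sp)
  qed
  have bb: "inS \<chi> (b*b)" using iS by (simp add: inS_mult)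
  have JJ: "J \<chi> RR (smul (- (t * inverse r2)) (brk b (brk b d r2) (q*r2) * a)
    + smul (inverse q * inverse q * t * inverse r1 * inverse r1 * inverse r2 * inverse r3) (a * brk b (brk b d r2) (q*r2))
    + smul (- (inverse q * inverse q * t * inverse r1 * inverse r1 * inverse r2 * inverse r3)) (brk (brk a b r1) b (r1*q) * d)
    + smul (r2 * t * inverse r1 * inverse r1) (d * brk (brk a b r1) b (r1*q))
    + smul (- (r2 * inverse q * t * inverse r1 * inverse r1 * inverse r3)) (brk a d r3 * (b*b))
    + smul (inverse q * inverse r1 * inverse r3) (b * (brk a d r3 * b))
    + smul (- (t * inverse r2 * inverse r3)) (b * (b * brk a d r3)))"
    using J_right[OF JR1 iS(1)] J_left[OF JR1 iS(1)] J_right[OF JR2 iS(3)] J_left[OF JR2 iS(3)]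
      J_right[OF JR3 bb] J_left[OF J_right[OF JR3 iS(2)] iS(2)] J_left[OF J_left[OF JR3 iS(2)] iS(2)]
    by (intro J_add J_smul)
  have ne: "i - 1 \<noteq> i" "i \<noteq> i + 1" "i - 1 \<noteq> i + 1" using i by auto
  have eq: "brk b (brk d (brk b a (inverse q * inverse r1)) (inverse q * inverse r2 * inverse r3)) (r2*q*(inverse q * inverse r1)) = smul (- (t * inverse r2)) (brk b (brk b d r2) (q*r2) * a)
    + smul (inverse q * inverse q * t * inverse r1 * inverse r1 * inverse r2 * inverse r3) (a * brk b (brk b d r2) (q*r2))
    + smul (- (inverse q * inverse q * t * inverse r1 * inverse r1 * inverse r2 * inverse r3)) (brk (brk a b r1) b (r1*q) * d)
    + smul (r2 * t * inverse r1 * inverse r1) (d * brk (brk a b r1) b (r1*q))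
    + smul (- (r2 * inverse q * t * inverse r1 * inverse r1 * inverse r3)) (brk a d r3 * (b*b))
    + smul (inverse q * inverse r1 * inverse r3) (b * (brk a d r3 * b))
    + smul (- (t * inverse r2 * inverse r3)) (b * (b * brk a d r3))"
    unfolding a_def b_def d_def by (rule core1) (use ne q_nz nz ht in auto)
  show ?thesis unfolding LHS eq by (rule JJ)
qed

lemma J_core2:
  assumes n3: "3 \<le> n"
  shows "J \<chi> RR (fst (sbr g \<chi> (xg (n-1)) (sbr g \<chi> (xg (n-1)) (xg (n-2)))))"
proof -
  define r1 where "r1 = \<chi> (n-2) (g (n-1))"
  define a where "a = (Poly_Mapping.single (0, [n-2]) 1 :: ('g,'k) galg)"
  define b where "b = (Poly_Mapping.single (0, [n-1]) 1 :: ('g,'k) galg)"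
  have nz: "r1 \<noteq> 0" unfolding r1_def using n3 chi_nz by auto
  have q: "\<chi> (n-1) (g (n-1)) = q" using pii n3 by auto
  have e: "n - 1 - 1 = n - 2" by simp
  have pba: "\<chi> (n-1) (g (n-2)) = inverse q * inverse r1"
    using padj[of "n-1"] n3 nz q_nz unfolding r1_def e by (simp add: field_simps)
  have sp: "Sp \<chi> (xg (n-2))" "Sp \<chi> (xg (n-1))" using n3 Sp_xg by auto
  have "fst (sbr g \<chi> (xg (n-1)) (sbr g \<chi> (xg (n-1)) (xg (n-2))))
     = brk b (brk b a (\<chi> (n-1) (g (n-2)))) (\<chi> (n-1) (g (n-1)) * \<chi> (n-1) (g (n-2)))"
    using sp by (simp add: sbr_fst sbr_snd Sp_sbr fst_xg snd_xg pds a_def b_def)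
  also have "\<dots> = brk b (brk b a (inverse q * inverse r1)) (q * (inverse q * inverse r1))"
    by (simp only: pba q)
  finally have LHS: "fst (sbr g \<chi> (xg (n-1)) (sbr g \<chi> (xg (n-1)) (xg (n-2))))
     = brk b (brk b a (inverse q * inverse r1)) (q * (inverse q * inverse r1))" .
  have "fst (sbr g \<chi> (sbr g \<chi> (xg (n-2)) (xg (n-1))) (xg (n-1))) = brk (brk a b r1) b (r1*\<chi> (n-1) (g (n-1)))"
    using sp by (simp add: sbr_fst sbr_snd Sp_sbr fst_xg snd_xg pds a_def b_def r1_def)
  then have R2: "fst (sbr g \<chi> (sbr g \<chi> (xg (n-2)) (xg (n-1))) (xg (n-1))) = brk (brk a b r1) b (r1*q)"
    by (simp only: q)
  have JR2: "J \<chi> RR (brk (brk a b r1) b (r1*q))"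
    unfolding R2[symmetric]
  proof (rule J_gen)
    have "fst (sbr g \<chi> (sbr g \<chi> (xg (n-2)) (xg ((n-2)+1))) (xg ((n-2)+1))) \<in> RR"
      unfolding sp_rels_def by (rule UnI1, rule UnI1, rule UnI1, rule UnI2, rule CollectI, rule exI[of _ "n-2"]) (use n3 in auto)
    moreover have "n - 2 + 1 = n - 1" using n3 by simp
    ultimately show "fst (sbr g \<chi> (sbr g \<chi> (xg (n-2)) (xg (n-1))) (xg (n-1))) \<in> RR" by simp
    show "inS \<chi> (fst (sbr g \<chi> (sbr g \<chi> (xg (n-2)) (xg (n-1))) (xg (n-1))))" using Sp_def by (metis Sp_sbr sp)
  qed
  have ne: "n - 2 \<noteq> n - 1" using n3 by auto
  have eq: "brk b (brk b a (inverse q * inverse r1)) (q * (inverse q * inverse r1))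
    = smul (inverse q * inverse r1 * inverse r1) (brk (brk a b r1) b (r1*q))"
    unfolding a_def b_def by (rule core2) (use ne q_nz nz in auto)
  show ?thesis unfolding LHS eq by (rule J_smul[OF JR2])
qed

end



lemma upt_split: "a \<le> b \<Longrightarrow> b \<le> c \<Longrightarrow> [a..<c] = [a..<b] @ [b..<c]"
  by (metis le_add_diff_inverse upt_add_eq_append)

context spset
begin

lemma Sp_map_xg: "1 \<le> s \<Longrightarrow> \<forall>z\<in>set (map xg (rev [s..<n])). Sp \<chi> z"
  using Sp_xg by auto

lemma Y_lemma:
  assumes s: "1 \<le> s" "s < i" and i: "i + 1 \<le> n"
  shows "Pr g \<chi> RR (xg i) (rnest g \<chi> (map xg (rev [s..<n])))"
proof (cases "i + 2 \<le> n")
  case True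
  have "[s..<n] = [s..<i-1] @ [i-1..<n]" using s i by (intro upt_split) auto
  also have "[i-1..<n] = [i-1..<i+2] @ [i+2..<n]" using s True by (intro upt_split) auto
  also have "[i-1..<i+2] = [i-1, i, i+1]" using s by (simp add: upt_conv_Cons)
  finally have sp: "map xg (rev [s..<n]) = map xg (rev [i+2..<n]) @ (xg (i+1) # xg i # xg (i-1) # map xg (rev [s..<i-1]))"
    by simp
  have allsp: "\<forall>z\<in>set (map xg (rev [i+2..<n]) @ (xg (i+1) # xg i # xg (i-1) # map xg (rev [s..<i-1]))). Sp \<chi> z"
    using Sp_map_xg[OF s(1)] unfolding sp[symmetric] .
  have spi: "Sp \<chi> (xg (i-1))" "Sp \<chi> (xg i)" "Sp \<chi> (xg (i+1))" using s i Sp_xg by auto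
  have core: "Pr g \<chi> RR (xg i) (rnest g \<chi> (xg (i+1) # xg i # xg (i-1) # map xg (rev [s..<i-1])))"
  proof (cases "s = i - 1")
    case True
    then show ?thesis using J_core1[of i] s True \<open>i + 2 \<le> n\<close> by (simp add: Pr_def)
  next
    case False
    let ?cs = "map xg (rev [s..<i-1])"
    have ne: "?cs \<noteq> []" using False s by auto
    have spc: "\<forall>z\<in>set ?cs. Sp \<chi> z" using s i Sp_xg by auto
    have Spc: "Sp \<chi> (rnest g \<chi> ?cs)" using rnest_Sp[OF ne spc] .
    have Pb: "Pr g \<chi> RR (xg i) (rnest g \<chi> ?cs)"
      using ne spi spc s i by (intro P_rnest) (auto intro!: rel_far')
    have Pd: "Pr g \<chi> RR (xg (i+1)) (rnest g \<chi> ?cs)"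
      using ne spi spc s i by (intro P_rnest) (auto intro!: rel_far')
    have "Pr g \<chi> RR (xg i) (sbr g \<chi> (xg (i+1)) (sbr g \<chi> (xg i) (sbr g \<chi> (xg (i-1)) (rnest g \<chi> ?cs))))"
      by (rule push1[OF spi(1) spi(2) spi(3) Spc Pb Pd J_core1]) (use s True in auto)
    then show ?thesis using ne by (simp add: rnest_Cons)
  qed
  have far: "\<forall>z\<in>set (map xg (rev [i+2..<n])). Pr g \<chi> RR (xg i) z"
    using s by (auto intro!: rel_far)
  show ?thesis unfolding sp
    by (rule P_rnest_append[OF _ spi(2) allsp far core]) simp
next
  case False
  then have ni: "i = n - 1" "3 \<le> n" using s i by auto
  have "[s..<n] = [s..<n-2] @ [n-2..<n]" using s ni by (intro upt_split) auto
  also have "[n-2..<n] = [n-2, n-1]" using ni by (simp add: upt_conv_Cons numeral_eq_Suc)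
  finally have sp: "map xg (rev [s..<n]) = xg (n-1) # xg (n-2) # map xg (rev [s..<n-2])"
    by simp
  have spi: "Sp \<chi> (xg (n-2))" "Sp \<chi> (xg (n-1))" using ni Sp_xg by auto
  show ?thesis
  proof (cases "s = n - 2")
    case True
    then show ?thesis unfolding sp using J_core2 ni by (simp add: Pr_def)
  next
    case False
    let ?cs = "map xg (rev [s..<n-2])"
    have ne: "?cs \<noteq> []" using False s ni by auto
    have spc: "\<forall>z\<in>set ?cs. Sp \<chi> z" using s ni Sp_xg by auto
    have Spc: "Sp \<chi> (rnest g \<chi> ?cs)" using rnest_Sp[OF ne spc] .
    have Pb: "Pr g \<chi> RR (xg (n-1)) (rnest g \<chi> ?cs)"
      using ne spi spc s ni by (intro P_rnest) (auto intro!: rel_far')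
    have "Pr g \<chi> RR (xg (n-1)) (sbr g \<chi> (xg (n-1)) (sbr g \<chi> (xg (n-2)) (rnest g \<chi> ?cs)))"
      by (rule push2[OF spi(1) spi(2) Spc Pb J_core2[OF ni(2)]])
    then show ?thesis unfolding sp ni(1) using ne by (simp add: rnest_Cons)
  qed
qed

end


lemma map_xe_low: "\<forall>j\<in>set js. j \<le> n \<Longrightarrow> map (xe n) js = map xg js"
  by (auto simp: xe_def)

lemma vw_eq:
  assumes "n < m" "m < 2*n"
  shows "vw n g \<chi> (n+1) m = rnest g \<chi> (map xg (rev [2*n-m..<n]))"
proof -
  have "map (xe n) [n+1..<m+1] = map xg (map (\<lambda>j. 2*n - j) [n+1..<m+1])"
    by (auto simp: xe_def)
  also have "map (\<lambda>j. 2*n - j) [n+1..<m+1] = rev [2*n-m..<n]"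
  proof (rule nth_equalityI)
    show "length (map (\<lambda>j. 2 * n - j) [n + 1..<m + 1]) = length (rev [2 * n - m..<n])" using assms by simp
    fix j assume "j < length (map (\<lambda>j. 2 * n - j) [n + 1..<m + 1])"
    then have j: "j < m - n" using assms by (simp del: upt_Suc)
    then show "map (\<lambda>j. 2 * n - j) [n + 1..<m + 1] ! j = rev [2 * n - m..<n] ! j"
      using assms by (simp add: rev_nth nth_upt del: upt_Suc)
  qed
  finally show ?thesis unfolding vw_def by (rule arg_cong)
qed

theorem lemma3p5:
  fixes n k m :: nat and q :: "'k::field"
    and g :: "nat \<Rightarrow> 'g::ab_group_add" and \<chi> :: "nat \<Rightarrow> 'g \<Rightarrow> 'k"
    and t1 t2 :: "(('g,'k) galg \<times> nat list) btree"
  assumes n2: "n \<ge> 2"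
    and chi_hom: "\<And>i a b. 1 \<le> i \<Longrightarrow> i \<le> n \<Longrightarrow> \<chi> i (a + b) = \<chi> i a * \<chi> i b"
    and chi_nz: "\<And>i a. 1 \<le> i \<Longrightarrow> i \<le> n \<Longrightarrow> \<chi> i a \<noteq> 0"
    and q_nz: "q \<noteq> 0" and q3: "q ^ 3 \<noteq> 1" and qm1: "q \<noteq> -1"
    and pii: "\<And>i. 1 \<le> i \<Longrightarrow> i < n \<Longrightarrow> \<chi> i (g i) = q"
    and pnn: "\<chi> n (g n) = q ^ 2"
    and padj: "\<And>i. 1 < i \<Longrightarrow> i < n \<Longrightarrow> \<chi> i (g (i-1)) * \<chi> (i-1) (g i) = inverse q"
    and plast: "\<chi> (n-1) (g n) * \<chi> n (g (n-1)) = inverse (q ^ 2)"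
    and pfar: "\<And>i j. 1 \<le> i \<Longrightarrow> i + 1 < j \<Longrightarrow> j \<le> n \<Longrightarrow> \<chi> i (g j) * \<chi> j (g i) = 1"
    and k: "1 \<le> k" "k \<le> n"
    and m: "2*n - k < m" "m < 2*n"
    and t1: "leaves t1 = map (xe n) [k..<n+1] @ [vw n g \<chi> (n+1) m]"
    and t2: "leaves t2 = map (xe n) [k..<n+1] @ [vw n g \<chi> (n+1) m]"
  shows "Ueq n g \<chi> (fst (bval (sbr g \<chi>) t1)) (fst (bval (sbr g \<chi>) t2))"
proof -
  interpret spset n q g \<chi>
    by unfold_locales (use n2 chi_hom chi_nz q_nz qm1 pii padj pfar in auto)
  define s where "s = 2*n - m"
  have s: "1 \<le> s" "s < k" using m k unfolding s_def by auto
  have nm: "n < m" using m k by auto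
  define y where "y = rnest g \<chi> (map xg (rev [s..<n]))"
  have yeq: "vw n g \<chi> (n+1) m = y" unfolding y_def s_def using vw_eq nm m(2) by simp
  define L where "L = map xg [k..<n+1] @ [y]"
  have Leq: "map (xe n) [k..<n+1] @ [vw n g \<chi> (n+1) m] = L"
    unfolding L_def yeq by (subst map_xe_low) auto
  have spy: "Sp \<chi> y" unfolding y_def using s k by (intro rnest_Sp Sp_map_xg) auto
  have spL: "\<forall>z\<in>set L. Sp \<chi> z" unfolding L_def using spy k Sp_xg by auto
  have lenL: "length L = n + 2 - k" unfolding L_def using k by simp
  have Lx: "L ! i = xg (k + i)" if "i < n + 1 - k" for i
    unfolding L_def using that by (simp add: nth_append del: upt_Suc)
  have Ly: "L ! (n + 1 - k) = y" unfolding L_def using k by (simp add: nth_append del: upt_Suc)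
  have gd: "goodl g \<chi> RR L"
  proof (rule goodl_nth)
    fix i j assume ij: "i + 1 < j" "j < length L"
    then have i: "i < n + 1 - k" using lenL k by auto
    show "Pr g \<chi> RR (L ! i) (L ! j)"
    proof (cases "j < n + 1 - k")
      case True
      then show ?thesis using Lx[OF i] Lx[OF True] ij k by (auto intro!: rel_far)
    next
      case False
      then have "j = n + 1 - k" using ij lenL by auto
      then show ?thesis unfolding Lx[OF i] using Ly y_def ij k s
        by (auto intro!: Y_lemma)
    qed
  qed
  have lt1: "leaves t1 = L" using t1 Leq by (rule trans)
  have e1: "eqv \<chi> RR (bval (sbr g \<chi>) t1) (rnest g \<chi> L)"
    using tree_eqv[of g \<chi> RR t1, unfolded lt1] gd spL by blast
  have lt2: "leaves t2 = L" using t2 Leq by (rule trans)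
  have e2: "eqv \<chi> RR (bval (sbr g \<chi>) t2) (rnest g \<chi> L)"
    using tree_eqv[of g \<chi> RR t2, unfolded lt2] gd spL by blast
  have "eqv \<chi> RR (bval (sbr g \<chi>) t1) (bval (sbr g \<chi>) t2)"
    using eqv_trans[OF e1 eqv_sym[OF e2]] .
  then show ?thesis unfolding Ueq_def eqv_def J_def by simp
qed


end
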